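(* Let $X$ be a non-empty set, $R$ a binary relation on $X$, and $\tau$ a compact topology on $X$ such that $R$ is upper tc-semicontinuous with respect to $\tau$. Let $\mu(\Xi,\widetilde{R})=\{X^*_i : i\in I\}$ be the family of $\widetilde{R}$-maximal strong components of $(X,R)$. Then a set $W\subseteq X$ is a $w$-stable set of $(X,R)$ if and only if there exist $J\subseteq I$ and, for each $j\in J$, an element $x_j\in X^*_j$ such that $W=\{x_j : j\in J\}$ (i.e. $W$ is contained in the union of the $\widetilde{R}$-maximal components and contains at most one alternative from each of them).
   Context: For a binary relation $R$ on $X$, the transitive closure $\overline{R}$ is defined by: $x\overline{R}y$ iff there exist $K\ge 1$ and $x_0,\dots,x_K\in X$ with $x_0=x$, $x_K=y$, and $x_{k-1}Rx_k$ for all $k\in\{1,\dots,K\}$. A set $F\subseteq X$ is a $w$-stable set of $(X,R)$ if (i) (internal stability) for all distinct $x,y\in F$, $(x,y)\notin\overline{R}$; and (ii) (external stability) for all $x\in F$ and $y\in X\setminus F$, if $y\overline{R}x$ then $x\overline{R}y$. $R$ is upper tc-semicontinuous with respect to $\tau$ if for every $x\in X$ the set $\{y\in X: x\overline{R}y\}$ is open in $\tau$. A topology is compact if every open cover of $X$ has a finite subcover. Strong components: define the equivalence relation $x\sim y$ iff $x=y$ or ($x\overline{R}y$ and $y\overline{R}x$). The ground sets of the strong components of $(X,R)$ are the equivalence classes of $\sim$ (so an element lying on no cycle forms a singleton component); they partition $X$. Let $\Xi$ be the set of these classes. The contraction of $(X,R)$ is $(\Xi,\widetilde{R})$, where for $A,B\in\Xi$,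 $A\widetilde{R}B$ iff there exist $x\in A$, $y\in B$ with $xRy$. A class $A\in\Xi$ is $\widetilde{R}$-maximal if there is no $B\in\Xi$ with $B\ne A$ and $B\widetilde{R}A$. $\mu(\Xi,\widetilde{R})$ denotes the family of $\widetilde{R}$-maximal classes in $\Xi$. *)

theory Defs
  imports "HOL-Analysis.Analysis"
begin

text \<open>Transitive closure of R is the library's trancl (R^+), which matches the
paper's definition (chains of length K \<ge> 1).\<close>

definition w_stable :: "'a set \<Rightarrow> ('a \<times> 'a) set \<Rightarrow> 'a set \<Rightarrow> bool" where
  "w_stable X R F \<longleftrightarrow> F \<subseteq> X
     \<and> (\<forall>x\<in>F. \<forall>y\<in>F. x \<noteq> y \<longrightarrow> (x, y) \<notin> R\<^sup>+)
     \<and> (\<forall>x\<in>F. \<forall>y\<in>X - F. (y, x) \<in> R\<^sup>+ \<longrightarrow> (x, y) \<in> R\<^sup>+)"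

definition upper_tc_semicontinuous :: "'a topology \<Rightarrow> 'a set \<Rightarrow> ('a \<times> 'a) set \<Rightarrow> bool" where
  "upper_tc_semicontinuous T X R \<longleftrightarrow> (\<forall>x\<in>X. openin T {y\<in>X. (x, y) \<in> R\<^sup>+})"

definition strong_equiv :: "'a set \<Rightarrow> ('a \<times> 'a) set \<Rightarrow> ('a \<times> 'a) set" where
  "strong_equiv X R = {(x, y). x \<in> X \<and> y \<in> X \<and> (x = y \<or> ((x, y) \<in> R\<^sup>+ \<and> (y, x) \<in> R\<^sup>+))}"

definition strong_components :: "'a set \<Rightarrow> ('a \<times> 'a) set \<Rightarrow> 'a set set" where
  "strong_components X R = X // strong_equiv X R"

definition contr_rel :: "('a \<times> 'a) set \<Rightarrow> 'a set \<Rightarrow> 'a set \<Rightarrow> bool" where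
  "contr_rel R A B \<longleftrightarrow> (\<exists>x\<in>A. \<exists>y\<in>B. (x, y) \<in> R)"

definition maximal_components :: "'a set \<Rightarrow> ('a \<times> 'a) set \<Rightarrow> 'a set set" where
  "maximal_components X R = {A \<in> strong_components X R.
      \<not> (\<exists>B\<in>strong_components X R. B \<noteq> A \<and> contr_rel R B A)}"

end

theory Submission
  imports Defs
begin

lemma se_equiv: "equiv X (strong_equiv X R)"
  unfolding equiv_def refl_on_def sym_def trans_def strong_equiv_def
  by (auto intro: trancl_trans)

lemma class_of:
  assumes "A \<in> strong_components X R" "x \<in> A"
  shows "A = strong_equiv X R `` {x}"
proof -
  from assms(1) obtain a where a: "a \<in> X" "A = strong_equiv X R `` {a}"
    unfolding strong_components_def by (auto elim: quotientE)
  with assms(2) have "(a, x) \<in> strong_equiv X R" by auto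
  then show ?thesis using a equiv_class_eq[OF se_equiv] by metis
qed

lemma comp_sub: "A \<in> strong_components X R \<Longrightarrow> A \<subseteq> X"
  unfolding strong_components_def strong_equiv_def by (auto elim!: quotientE)

lemma max_step:
  assumes RX: "R \<subseteq> X \<times> X" and A: "A \<in> maximal_components X R" and w: "w \<in> A"
    and zw: "(z, w) \<in> R"
  shows "z \<in> A"
proof -
  have Ac: "A \<in> strong_components X R" using A unfolding maximal_components_def by auto
  have zX: "z \<in> X" using zw RX by auto
  let ?B = "strong_equiv X R `` {z}"
  have B: "?B \<in> strong_components X R" unfolding strong_components_def
    using zX by (auto intro: quotientI)
  have zB: "z \<in> ?B" using zX unfolding strong_equiv_def by auto
  have "contr_rel R ?B A" unfolding contr_rel_def using zB w zw by auto
  then have "?B = A" using A B unfolding maximal_components_def by auto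
  then show ?thesis using zB by auto
qed

lemma max_pred:
  assumes RX: "R \<subseteq> X \<times> X" and A: "A \<in> maximal_components X R" 
  shows "(z, y) \<in> R\<^sup>+ \<Longrightarrow> y \<in> A \<Longrightarrow> z \<in> A"
proof (induction rule: converse_trancl_induct)
  case (base y)
  then show ?case using max_step[OF RX A] by blast
next
  case (step y z)
  then show ?case using max_step[OF RX A] by blast
qed

lemma pred_max:
  assumes Ac: "A \<in> strong_components X R"
    and cl: "\<And>z w. w \<in> A \<Longrightarrow> (z, w) \<in> R \<Longrightarrow> z \<in> A"
  shows "A \<in> maximal_components X R"
  unfolding maximal_components_def
proof (intro CollectI conjI notI Ac)
  assume "\<exists>B\<in>strong_components X R. B \<noteq> A \<and> contr_rel R B A"
  then obtain B x y where B: "B \<in> strong_components X R" "B \<noteq> A" "x \<in> B" "y \<in> A" "(x,y) \<in> R"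
    unfolding contr_rel_def by auto
  then have "x \<in> A" using cl by auto
  then show False using class_of[OF Ac] class_of[OF B(1) B(3)] B by auto
qed

theorem theorem2:
  fixes X :: "'a set" and R :: "('a \<times> 'a) set" and T :: "'a topology" and W :: "'a set"
  assumes "X \<noteq> {}"
    and RX: "R \<subseteq> X \<times> X"
    and "topspace T = X"
    and "compact_space T"
    and "upper_tc_semicontinuous T X R"
  shows "w_stable X R W \<longleftrightarrow>
    (\<exists>J f. J \<subseteq> maximal_components X R \<and> (\<forall>A\<in>J. f A \<in> A) \<and> W = f ` J)"
proof
  assume ws: "w_stable X R W"
  have WX: "W \<subseteq> X" and int: "\<And>x y. x \<in> W \<Longrightarrow> y \<in> W \<Longrightarrow> x \<noteq> y \<Longrightarrow> (x, y) \<notin> R\<^sup>+"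
    and ext: "\<And>x y. x \<in> W \<Longrightarrow> y \<in> X - W \<Longrightarrow> (y, x) \<in> R\<^sup>+ \<Longrightarrow> (x, y) \<in> R\<^sup>+"
    using ws unfolding w_stable_def by blast+
  define cl where "cl x = strong_equiv X R `` {x}" for x
  define J where "J = cl ` W"
  define f where "f A = (SOME x. x \<in> W \<and> x \<in> A)" for A
  have clc: "cl x \<in> strong_components X R" if "x \<in> W" for x
    using that WX unfolding cl_def strong_components_def by (auto intro: quotientI)
  have xcl: "x \<in> cl x" if "x \<in> W" for x
    using that WX unfolding cl_def strong_equiv_def by auto
  have uniq: "y = x" if "x \<in> W" "y \<in> W" "y \<in> cl x" for x y
    using that int unfolding cl_def strong_equiv_def by auto
  have fx: "f (cl x) = x" if "x \<in> W" for x
    unfolding f_def using that xcl uniq by (metis (no_types, lifting) someI_ex)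
  have "J \<subseteq> maximal_components X R"
  proof
    fix A assume "A \<in> J"
    then obtain x where x: "x \<in> W" "A = cl x" unfolding J_def by auto
    have closed: "z \<in> A" if "w \<in> A" "(z, w) \<in> R" for z w
    proof -
      have Ac: "A \<in> strong_components X R" using x clc by auto
      have wx: "(x, w) \<in> strong_equiv X R" using that x unfolding cl_def by auto
      have zX: "z \<in> X" using that RX by auto
      have zx: "(z, x) \<in> R\<^sup>+"
      proof (cases "w = x")
        case True then show ?thesis using that by auto
      next
        case False then have "(w, x) \<in> R\<^sup>+" using wx unfolding strong_equiv_def by auto
        then show ?thesis using that by auto
      qed
      show "z \<in> A"
      proof (cases "z \<in> W")
        case True
        then have "z = x" using int[OF True x(1)] zx by auto
        then show ?thesis using x xcl by auto
      next
        case False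
        then have "(x, z) \<in> R\<^sup>+" using ext[OF x(1)] zX zx by auto
        then show ?thesis using zx zX x WX unfolding cl_def strong_equiv_def by auto
      qed
    qed
    show "A \<in> maximal_components X R"
      using pred_max[OF clc[OF x(1)]] closed x by auto
  qed
  moreover have "\<forall>A\<in>J. f A \<in> A" unfolding J_def using fx xcl by auto
  moreover have "W = f ` J" unfolding J_def using fx by (auto simp: image_image)
  ultimately show "\<exists>J f. J \<subseteq> maximal_components X R \<and> (\<forall>A\<in>J. f A \<in> A) \<and> W = f ` J"
    by blast
next
  assume "\<exists>J f. J \<subseteq> maximal_components X R \<and> (\<forall>A\<in>J. f A \<in> A) \<and> W = f ` J"
  then obtain J f where J: "J \<subseteq> maximal_components X R" and f: "\<forall>A\<in>J. f A \<in> A"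
    and W: "W = f ` J" by blast
  have Jc: "A \<in> strong_components X R" if "A \<in> J" for A
    using that J unfolding maximal_components_def by auto
  have "W \<subseteq> X" using W f comp_sub Jc by fastforce
  moreover have "(x, y) \<notin> R\<^sup>+" if hx: "x \<in> W" "y \<in> W" "x \<noteq> y" for x y
  proof
    assume xy: "(x, y) \<in> R\<^sup>+"
    obtain A B where AB: "A \<in> J" "B \<in> J" "x = f A" "y = f B" using hx(1,2) W by blast
    have "x \<in> B" using max_pred[OF RX] J AB xy f by blast
    then have "A = B" using class_of[OF Jc[OF AB(1)]] class_of[OF Jc[OF AB(2)]] AB f by metis
    then show False using AB hx by auto
  qed
  moreover have "(x, y) \<in> R\<^sup>+" if hy: "x \<in> W" "y \<in> X - W" "(y, x) \<in> R\<^sup>+" for x y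
  proof -
    obtain A where A: "A \<in> J" "x = f A" using hy(1) W by blast
    have "y \<in> A" using max_pred[OF RX] J A hy f by blast
    moreover have "x \<in> A" using f A by auto
    ultimately have "(x, y) \<in> strong_equiv X R" using class_of[OF Jc[OF A(1)], of x] by auto
    moreover have "x \<noteq> y" using hy by auto
    ultimately show ?thesis unfolding strong_equiv_def by auto
  qed
  ultimately show "w_stable X R W" unfolding w_stable_def by blast
qed

end
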